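(* Let $p>1$ and, for $h\in(0,1)$, let $a_h(x)=1$ for $x\in[0,\tfrac{1-h}{2}]\cup[\tfrac{1+h}{2},1]$ and $a_h(x)=0$ for $x\in(\tfrac{1-h}{2},\tfrac{1+h}{2})$. For any given $\lambda\in(\pi^2/4,\pi^2)$, there exists $R_\lambda>0$ such that, for every $R>R_\lambda$, there is $h=h(R)\in(0,1)$ for which the problem $$-u''=\lambda u+a_h(x)u^p \ \text{ in } (0,1),\qquad u(0)=u(1)=0,$$ has at least two asymmetric positive solutions $u$ with $\|u\|_\infty=R$. Moreover, $\lim_{R\uparrow+\infty}h(R)=1$.
   Context: A solution is a function $u\in\mathcal{C}^1([0,1])$ with $u'$ absolutely continuous satisfying the equation a.e. and the boundary conditions; a positive solution satisfies $u>0$ in $(0,1)$. A solution is asymmetric if $u(x)\neq u(1-x)$ for some $x\in[0,1]$. *)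

theory Defs
  imports "HOL-Analysis.Analysis"
begin

definition abs_cont_on :: "(real \<Rightarrow> real) \<Rightarrow> real \<Rightarrow> real \<Rightarrow> bool" where
  "abs_cont_on f a b \<longleftrightarrow>
     (\<forall>\<epsilon>>0. \<exists>\<delta>>0. \<forall>(n::nat) (xs::nat \<Rightarrow> real) (ys::nat \<Rightarrow> real).
        (\<forall>i<n. a \<le> xs i \<and> xs i \<le> ys i \<and> ys i \<le> b) \<and>
        (\<forall>i<n. \<forall>j<n. i \<noteq> j \<longrightarrow> ys i \<le> xs j \<or> ys j \<le> xs i) \<and>
        (\<Sum>i<n. ys i - xs i) < \<delta>
        \<longrightarrow> (\<Sum>i<n. \<bar>f (ys i) - f (xs i)\<bar>) < \<epsilon>)"

definition a_h :: "real \<Rightarrow> real \<Rightarrow> real" where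
  "a_h h x = (if (1 - h) / 2 < x \<and> x < (1 + h) / 2 then 0 else 1)"

definition is_solution :: "real \<Rightarrow> real \<Rightarrow> real \<Rightarrow> (real \<Rightarrow> real) \<Rightarrow> bool" where
  "is_solution p lam h u \<longleftrightarrow>
     (\<exists>u'. (\<forall>x\<in>{0..1}. (u has_real_derivative u' x) (at x within {0..1})) \<and>
           continuous_on {0..1} u' \<and>
           abs_cont_on u' 0 1 \<and>
           (AE x in lebesgue. x \<in> {0<..<1} \<longrightarrow>
              (u' has_real_derivative (- (lam * u x + a_h h x * u x powr p))) (at x))) \<and>
     u 0 = 0 \<and> u 1 = 0"

definition is_positive :: "(real \<Rightarrow> real) \<Rightarrow> bool" where
  "is_positive u \<longleftrightarrow> (\<forall>x\<in>{0<..<1}. u x > 0)"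

definition is_asymmetric :: "(real \<Rightarrow> real) \<Rightarrow> bool" where
  "is_asymmetric u \<longleftrightarrow> (\<exists>x\<in>{0..1}. u x \<noteq> u (1 - x))"

definition sup_norm01 :: "(real \<Rightarrow> real) \<Rightarrow> real" where
  "sup_norm01 u = (SUP x\<in>{0..1}. \<bar>u x\<bar>)"

end

theory Submission
  imports Defs
begin


locale setting =
  fixes p lam R :: real
  assumes p: "p > 1" and lam: "lam > 0" and R: "R > 0"
begin

definition k where "k = 2/(p+1)"
definition pw :: "real \<Rightarrow> real" where "pw y = y powr (p+1)"
definition Q :: "real \<Rightarrow> real \<Rightarrow> real" where
  "Q c y = lam*R^2 + k * pw c - lam*y^2 - k * pw y"
definition cl :: "real \<Rightarrow> real \<Rightarrow> real" where "cl c t = min c (max 0 t)"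
definition fi :: "real \<Rightarrow> real \<Rightarrow> real" where "fi c t = 1 / sqrt (Q c (cl c t))"
definition tau :: "real \<Rightarrow> real" where "tau c = integral {0..c} (fi c)"

lemma pw_cont[continuous_intros]:
  "continuous_on S f \<Longrightarrow> (\<forall>x\<in>S. 0 \<le> f x) \<Longrightarrow> continuous_on S (\<lambda>x. pw (f x))"
  unfolding pw_def using p by (intro continuous_on_powr') (auto intro: continuous_on_const)

lemma k_pos: "k > 0" using p by (simp add: k_def)

lemma Q_lower:
  assumes "0 \<le> y" "y \<le> c" "c < R"
  shows "Q c y \<ge> lam*(R^2-c^2)"
proof -
  have "y powr (p+1) \<le> c powr (p+1)" using assms p by (intro powr_mono2) auto
  moreover have "y^2 \<le> c^2" using assms by (intro power_mono) auto
  ultimately have "k * pw y \<le> k * pw c" "lam*y^2 \<le> lam*c^2"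
    using k_pos lam unfolding pw_def by (auto intro: mult_left_mono)
  then show ?thesis unfolding Q_def by (simp add: algebra_simps)
qed
lemma pos_gap: "0 \<le> c \<Longrightarrow> c < R \<Longrightarrow> lam*(R^2-c^2) > 0"
  using lam by (simp add: power_strict_mono)

lemma Q_pos: "0 \<le> y \<Longrightarrow> y \<le> c \<Longrightarrow> c < R \<Longrightarrow> Q c y > 0"
  using Q_lower pos_gap by (smt (verit))

lemma Q_upper: "0 \<le> y \<Longrightarrow> Q c y \<le> lam*R^2 + k * c powr (p+1)"
  unfolding Q_def pw_def using k_pos lam by (smt (verit) mult_nonneg_nonneg powr_ge_zero zero_le_power2)

lemma cl_in: "0 \<le> c \<Longrightarrow> 0 \<le> cl c t \<and> cl c t \<le> c"
  by (auto simp: cl_def)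

lemma cl_id: "0 \<le> t \<Longrightarrow> t \<le> c \<Longrightarrow> cl c t = t"
  by (auto simp: cl_def)

lemma Qcc: "Q c c = lam*(R^2-c^2)"
  by (simp add: Q_def algebra_simps)

lemma fi_cont_joint:
  assumes "m < R"
  shows "continuous_on ({0..m} \<times> {0..m}) (\<lambda>(c,t). fi c t)"
proof -
  have "continuous_on ({0..m} \<times> {0..m}) (\<lambda>z. 1 / sqrt (Q (fst z) (cl (fst z) (snd z))))"
    unfolding Q_def cl_def
    apply (intro continuous_intros continuous_on_powr')
    using assms apply auto
    subgoal for x y using Q_pos[of "min x y" x] by (auto simp: Q_def)
    done
  then show ?thesis unfolding fi_def by (simp add: case_prod_beta)
qed

lemma fi_cont:
  assumes "0 \<le> c" "c < R"
  shows "continuous_on S (fi c)"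
proof -
  have "continuous_on S (\<lambda>t. 1 / sqrt (Q c (cl c t)))"
    unfolding Q_def cl_def
    apply (intro continuous_intros)
    using assms apply auto
    subgoal for x using Q_pos[of "min c (max 0 x)" c] by (auto simp: Q_def)
    done
  then show ?thesis unfolding fi_def by simp
qed

lemma fi_pos: "0 \<le> c \<Longrightarrow> c < R \<Longrightarrow> fi c t > 0"
  unfolding fi_def using Q_pos[of "cl c t" c] cl_in[of c t] by auto

lemma fi_le: "0 \<le> c \<Longrightarrow> c < R \<Longrightarrow> fi c t \<le> 1 / sqrt (lam*(R^2-c^2))"
  unfolding fi_def using Q_lower[of "cl c t" c] cl_in[of c t] pos_gap[of c]
  by (auto intro!: divide_left_mono mult_pos_pos)

lemma fi_ge: "0 \<le> c \<Longrightarrow> c < R \<Longrightarrow> fi c t \<ge> 1 / sqrt (lam*R^2 + k * pw c)"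
  unfolding fi_def using Q_upper[of "cl c t" c] cl_in[of c t] Q_pos[of "cl c t" c]
  by (auto intro!: divide_left_mono mult_pos_pos simp: pw_def)

lemma fi_int: "0 \<le> c \<Longrightarrow> c < R \<Longrightarrow> fi c integrable_on {a..b}"
  by (intro integrable_continuous_interval fi_cont)

lemma tau_nonpos: "c \<le> 0 \<Longrightarrow> tau c = 0"
  unfolding tau_def by (cases "c = 0") auto

lemma fi_above: "0 \<le> c \<Longrightarrow> c \<le> t \<Longrightarrow> fi c t = 1 / sqrt (lam*(R^2-c^2))"
  unfolding fi_def cl_def using Qcc by auto

lemma tau_alt:
  assumes "0 \<le> c" "c \<le> m" "m < R"
  shows "tau c = integral {0..m} (fi c) - (m - c) / sqrt (lam*(R^2-c^2))"
proof -
  have "integral {0..c} (fi c) + integral {c..m} (fi c) = integral {0..m} (fi c)"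
    using assms by (intro Henstock_Kurzweil_Integration.integral_combine fi_int) auto
  moreover have "integral {c..m} (fi c) = integral {c..m} (\<lambda>t. 1 / sqrt (lam*(R^2-c^2)))"
    using assms by (intro integral_cong fi_above) auto
  moreover have "integral {c..m} (\<lambda>t. 1 / sqrt (lam*(R^2-c^2))) = (m - c) / sqrt (lam*(R^2-c^2))"
    using assms by simp
  ultimately show ?thesis unfolding tau_def by linarith
qed

lemma tau_cont0:
  assumes "m < R"
  shows "continuous_on {0..m} tau"
proof -
  have "continuous_on {0..m} (\<lambda>c. integral (cbox 0 m) (fi c))"
    by (rule integral_continuous_on_param) (use fi_cont_joint[OF assms] in simp)
  then have "continuous_on {0..m} (\<lambda>c. integral {0..m} (fi c) - (m - c) / sqrt (lam*(R^2-c^2)))"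
    using assms pos_gap by (intro continuous_intros) force+
  then show ?thesis
    by (rule continuous_on_eq) (use assms tau_alt in auto)
qed

lemma tau_cont:
  assumes "m < R"
  shows "continuous_on {..m} tau"
proof (cases "m \<ge> 0")
  case True
  have "continuous_on {..m} (\<lambda>c. tau (max 0 c))"
    by (rule continuous_on_compose2[OF tau_cont0[OF assms]]) (use True in \<open>auto intro!: continuous_intros\<close>)
  then show ?thesis
    by (rule continuous_on_eq) (auto simp: tau_nonpos max_def)
next
  case False
  then show ?thesis by (intro continuous_on_eq[OF continuous_on_const[of _ 0]]) (auto simp: tau_nonpos)
qed

lemma tau_lower:
  assumes "0 \<le> c" "c < R"
  shows "tau c \<ge> c / sqrt (lam*R^2 + k * pw c)"
proof -
  have "integral {0..c} (\<lambda>t. 1 / sqrt (lam*R^2 + k * pw c)) \<le> integral {0..c} (fi c)"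
    using assms by (intro integral_le fi_int fi_ge) auto
  then show ?thesis using assms unfolding tau_def by simp
qed

lemma tau_pos: "0 < c \<Longrightarrow> c < R \<Longrightarrow> tau c > 0"
proof -
  assume a: "0 < c" "c < R"
  have "lam*R^2 + k * pw c > 0" using lam R k_pos by (simp add: pw_def add_pos_nonneg)
  then have "c / sqrt (lam*R^2 + k * pw c) > 0" using a by simp
  then show ?thesis using tau_lower[of c] a by linarith
qed

lemma pw_split: "0 \<le> t \<Longrightarrow> pw t = t powr p * t"
  unfolding pw_def by (cases "t = 0") (auto simp: powr_add)

lemma tau_upper:
  assumes c: "0 < c" "c < R"
  shows "tau c \<le> 2 * sqrt (c powr (1-p) / k)"
proof -
  define d where "d = lam*(R^2-c^2)"
  define a where "a = k * c powr p"
  have d: "d > 0" unfolding d_def using pos_gap c by auto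
  have a: "a > 0" unfolding a_def using k_pos c by auto
  define g where "g t = 1 / sqrt (d + a*(c-t))" for t
  define G where "G t = -2 * sqrt (d + a*(c-t)) / a" for t
  have der: "(G has_real_derivative g t) (at t within {0..c})" if "t \<in> {0..c}" for t
  proof -
    have pos: "d + a*(c-t) > 0" using that d a by (auto intro: add_pos_nonneg)
    have "(G has_real_derivative (-2 / a) * (inverse (sqrt (d + a*(c-t))) / 2 * (- a))) (at t)"
      unfolding G_def using pos
      by (auto intro!: derivative_eq_intros simp: divide_simps)
    moreover have "(-2 / a) * (inverse (sqrt (d + a*(c-t))) / 2 * (- a)) = g t"
      using a by (simp add: g_def divide_simps)
    ultimately show ?thesis by (simp add: has_field_derivative_at_within)
  qed
  have int: "(g has_integral (G c - G 0)) {0..c}"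
    using der c by (intro fundamental_theorem_of_calculus)
      (auto simp: has_real_derivative_iff_has_vector_derivative[symmetric])
  have le: "fi c t \<le> g t" if "t \<in> {0..c}" for t
  proof -
    have t: "0 \<le> t" "t \<le> c" using that by auto
    have "t powr p * t \<le> c powr p * t" using t p by (intro mult_right_mono powr_mono2) auto
    then have "pw c - pw t \<ge> c powr p * (c - t)" using t c by (simp add: pw_split algebra_simps)
    then have "k * (pw c - pw t) \<ge> a * (c - t)" unfolding a_def using k_pos
      by (simp add: mult.assoc mult_left_mono)
    moreover have "lam*t^2 \<le> lam*c^2" using t lam by (intro mult_left_mono power_mono) auto
    ultimately have "Q c t \<ge> d + a*(c-t)" unfolding Q_def d_def by (simp add: algebra_simps)
    moreover have "d + a*(c-t) > 0" using t d a by (auto intro: add_pos_nonneg)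
    ultimately show ?thesis unfolding fi_def g_def using cl_id[OF t]
      by (auto intro!: divide_left_mono mult_pos_pos)
  qed
  have "tau c \<le> G c - G 0"
    unfolding tau_def using int le fi_int[of c 0 c] c
    by (intro has_integral_le[OF integrable_integral int]) auto
  also have "G c - G 0 = 2 * (sqrt (d + a*c) - sqrt d) / a"
    unfolding G_def by (simp add: divide_simps)
  also have "\<dots> \<le> 2 * sqrt (a*c) / a"
    using sqrt_add_le_add_sqrt[of d "a*c"] d a c by (intro divide_right_mono) auto
  also have "2 * sqrt (a*c) / a = 2 * sqrt (c / a)"
    using a c by (simp add: real_sqrt_divide divide_simps real_sqrt_mult)
  also have "c / a = c powr (1-p) / k"
    unfolding a_def using c by (simp add: powr_diff)
  finally show ?thesis .
qed

lemma pw_deriv: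
  assumes "z > 0"
  shows "(pw has_real_derivative (p+1) * z powr p) (at z)"
  unfolding pw_def using has_real_derivative_powr[OF assms, of "p+1"] by simp

lemma Q_deriv:
  assumes "z > 0"
  shows "(Q c has_real_derivative -(2*lam*z + 2 * z powr p)) (at z)"
proof -
  have d: "(Q c has_real_derivative (0 + 0 - lam * (2*z) - k * ((p+1) * z powr p))) (at z)"
    unfolding Q_def[abs_def]
    by (intro derivative_intros pw_deriv assms DERIV_cmult) (auto intro!: derivative_eq_intros)
  have "k * (p+1) = 2" using p by (simp add: k_def divide_simps)
  then have "k * ((p+1) * z powr p) = 2 * z powr p" by (metis mult.assoc)
  then have eq: "0 + 0 - lam * (2*z) - k * ((p+1) * z powr p) = -(2*lam*z + 2 * z powr p)"
    by linarith
  show ?thesis using d unfolding eq .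
qed

end

context setting begin

lemma aux_eq: "(s::real) \<noteq> 0 \<Longrightarrow> inverse s / 2 * (-(2*a*b + 2*B) * s) = -(a*b+B)"
  by (simp add: field_simps)

lemma left_piece:
  assumes c: "0 < c" "c < R"
  shows "\<exists>w w'. (\<forall>x\<in>{0..tau c}. (w has_real_derivative w' x) (at x))
     \<and> (\<forall>x\<in>{0<..<tau c}. (w' has_real_derivative -(lam * w x + w x powr p)) (at x))
     \<and> (\<forall>x\<in>{0..tau c}. \<forall>y\<in>{0..tau c}. \<bar>w' x - w' y\<bar> \<le> (lam*c + c powr p) * \<bar>x - y\<bar>)
     \<and> w 0 = 0 \<and> w (tau c) = c \<and> w' (tau c) = sqrt (lam*(R^2-c^2))
     \<and> (\<forall>x\<in>{0..tau c}. 0 \<le> w x \<and> w x \<le> c) \<and> (\<forall>x\<in>{0<..tau c}. 0 < w x)"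
proof -
  define f where "f = fi c"
  define f0 where "f0 = f 0"
  define m0 where "m0 = 1 / sqrt (lam*R^2 + k * pw c)"
  have c0: "0 \<le> c" using c by simp
  have fpos: "f t > 0" for t unfolding f_def using fi_pos c0 c by auto
  have fge: "f t \<ge> m0" for t unfolding f_def m0_def using fi_ge c0 c by auto
  have m0: "m0 > 0" unfolding m0_def using lam R k_pos by (simp add: pw_def add_pos_nonneg)
  have fcont: "continuous_on S f" for S unfolding f_def using fi_cont c0 c by auto
  have fint: "f integrable_on {a..b}" for a b by (intro integrable_continuous_interval fcont)
  have fneg: "f t = f0" if "t \<le> 0" for t unfolding f0_def f_def fi_def cl_def using that c by auto
  define X where "X y = integral {-1..y} f - f0" for y
  have Xder: "(X has_real_derivative f y) (at y)" if "y > -1" for y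
  proof -
    have "((\<lambda>x. integral {-1..x} f) has_real_derivative f y) (at y within {-1..y+1})"
      using that by (intro integral_has_real_derivative fcont) auto
    then have "((\<lambda>x. integral {-1..x} f) has_real_derivative f y) (at y)"
      using that at_within_Icc_at[of "-1" y "y+1"] by simp
    then show ?thesis unfolding X_def by (auto intro!: derivative_eq_intros)
  qed
  have Xdiff: "X y2 - X y1 = integral {y1..y2} f" if "-1 \<le> y1" "y1 \<le> y2" for y1 y2
    using Henstock_Kurzweil_Integration.integral_combine[OF that fint] unfolding X_def by simp
  have Xgrow: "X y2 - X y1 \<ge> m0 * (y2 - y1)" if "-1 \<le> y1" "y1 \<le> y2" for y1 y2
  proof -
    have "integral {y1..y2} (\<lambda>t. m0) \<le> integral {y1..y2} f"
      by (intro integral_le fint fge) auto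
    then show ?thesis using Xdiff[OF that] that by (simp add: mult.commute)
  qed
  have Xmono: "X y1 < X y2" if "-1 \<le> y1" "y1 < y2" for y1 y2
    using Xgrow[of y1 y2] that m0 by (smt (verit) mult_pos_pos)
  have X0: "X 0 = 0"
  proof -
    have "integral {-1..0} f = integral {-1..0} (\<lambda>t::real. f0)"
      by (rule Henstock_Kurzweil_Integration.integral_cong) (auto intro: fneg)
    then show ?thesis unfolding X_def by simp
  qed
  have Xc: "X c = tau c"
    using Xdiff[of 0 c] c X0 unfolding tau_def f_def by simp
  define a where "a = X (-1/2)"
  define b where "b = X (c+1)"
  have a: "a < 0" unfolding a_def using Xmono[of "-1/2" 0] X0 by simp
  have b: "b > tau c" unfolding b_def using Xmono[of c "c+1"] Xc c by simp
  have Xcont: "continuous_on {-1/2..c+1} X"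
    by (intro continuous_at_imp_continuous_on ballI DERIV_isCont[OF Xder]) auto
  define w where "w x = (THE y. -1/2 \<le> y \<and> y \<le> c+1 \<and> X y = x)" for x
  have wex: "-1/2 \<le> w x \<and> w x \<le> c+1 \<and> X (w x) = x" if ab: "a \<le> x" "x \<le> b" for x
  proof -
    obtain y where y: "-1/2 \<le> y" "y \<le> c+1" "X y = x"
      using IVT'[of X "-1/2" x "c+1"] ab Xcont c unfolding a_def b_def by auto
    have uniq: "z = y" if "-1/2 \<le> z" "z \<le> c+1" "X z = x" for z
    proof -
      have "\<not> z < y" using Xmono[of z y] that y by auto
      moreover have "\<not> y < z" using Xmono[of y z] that y by auto
      ultimately show ?thesis by linarith
    qed
    have "w x = y" unfolding w_def
      by (rule the_equality) (use y in blast, use uniq in blast)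
    then show ?thesis using y by simp
  qed
  have wX: "w (X y) = y" if "-1/2 \<le> y" "y \<le> c+1" for y
  proof -
    have "a \<le> X y" unfolding a_def using Xmono[of "-1/2" y] that by (cases "y = -1/2") auto
    moreover have "X y \<le> b" unfolding b_def using Xmono[of y "c+1"] that by (cases "y = c+1") auto
    ultimately
    have "-1/2 \<le> w (X y) \<and> w (X y) \<le> c+1 \<and> X (w (X y)) = X y" by (rule wex)
    then have h: "-1/2 \<le> w (X y)" "w (X y) \<le> c+1" "X (w (X y)) = X y" by auto
    have "\<not> y < w (X y)" using Xmono[of y "w (X y)"] that h by auto
    moreover have "\<not> w (X y) < y" using Xmono[of "w (X y)" y] that h by auto
    ultimately show ?thesis by linarith
  qed
  have wrange: "0 \<le> w x \<and> w x \<le> c" if "0 \<le> x" "x \<le> tau c" for x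
  proof -
    have h: "-1/2 \<le> w x \<and> w x \<le> c+1 \<and> X (w x) = x" using wex that a b by auto
    have "\<not> w x < 0" using Xmono[of "w x" 0] h X0 that by auto
    moreover have "\<not> w x > c" using Xmono[of c "w x"] h Xc that c by auto
    ultimately show ?thesis by auto
  qed
  have wpos: "0 < w x" if "0 < x" "x \<le> tau c" for x
  proof -
    have h: "-1/2 \<le> w x \<and> w x \<le> c+1 \<and> X (w x) = x" using wex that a b by auto
    have "\<not> w x \<le> 0" using Xmono[of "w x" 0] h X0 that by (cases "w x = 0") auto
    then show ?thesis by auto
  qed
  have wlt: "w x < c" if "x < tau c" "0 \<le> x" for x
  proof -
    have h: "-1/2 \<le> w x \<and> w x \<le> c+1 \<and> X (w x) = x" using wex that a b by auto
    have "\<not> w x \<ge> c" using Xmono[of c "w x"] h Xc that c by (cases "w x = c") auto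
    then show ?thesis by auto
  qed
  define w' where "w' x = sqrt (Q c (cl c (w x)))" for x
  have wder: "(w has_real_derivative w' x) (at x)" if "x \<in> {0..tau c}" for x
  proof -
    have x: "a < x" "x < b" using that a b by auto
    have wx: "0 \<le> w x" "w x \<le> c" using wrange that by auto
    have ic: "isCont w (X (w x))"
    proof (rule isCont_inverse_function[where d="1/2" and x="w x" and g=w and f=X])
      fix z assume "\<bar>z - w x\<bar> \<le> 1/2"
      then have z: "-1/2 \<le> z" "z \<le> c+1" using wx by arith+
      show "w (X z) = z" by (rule wX[OF z])
      show "isCont X z" using z by (intro DERIV_isCont[OF Xder]) auto
    qed auto
    have "(w has_real_derivative inverse (f (w x))) (at x)"
    proof (rule DERIV_inverse_function[OF Xder _ x])
      show "w x > -1" using wx by simp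
      show "f (w x) \<noteq> 0" using fpos[of "w x"] by simp
      show "X (w y) = y" if "a < y" "y < b" for y using wex that by auto
      show "isCont w x" using ic wex x by auto
    qed
    moreover have "inverse (f (w x)) = w' x" unfolding w'_def f_def fi_def by simp
    ultimately show ?thesis by simp
  qed
  have wcont: "continuous_on {0..tau c} w"
    by (intro continuous_at_imp_continuous_on ballI DERIV_isCont[OF wder])
  have w2der: "(w' has_real_derivative -(lam * w x + w x powr p)) (at x)" if "x \<in> {0<..<tau c}" for x
  proof -
    have wx: "0 < w x" "w x < c" using that wpos wlt by auto
    have "(w has_real_derivative w' x) (at x)" using wder that by auto
    then have ic: "isCont w x" by (rule DERIV_isCont)
    have ev: "eventually (\<lambda>y. w y \<in> {0<..<c}) (nhds x)"
    proof -
      have "eventually (\<lambda>y. w y \<in> {0<..<c}) (at x)"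
        by (rule topological_tendstoD[OF ic[unfolded isCont_def]]) (use wx in auto)
      then show ?thesis unfolding eventually_nhds_conv_at using wx by auto
    qed
    have ev2: "eventually (\<lambda>y. w' y = sqrt (Q c (w y))) (nhds x)"
      using ev by eventually_elim (auto simp: w'_def cl_id)
    have Qp: "Q c (w x) > 0" using Q_pos[of "w x" c] wx c by auto
    have wdx: "(w has_real_derivative w' x) (at x)" using wder that by auto
    have d1: "((\<lambda>y. Q c (w y)) has_real_derivative (-(2*lam*w x + 2 * w x powr p)) * w' x) (at x)"
      by (rule DERIV_chain2[where f="Q c" and g=w, OF Q_deriv[OF wx(1)] wdx])
    have d2: "((\<lambda>y. sqrt (Q c (w y))) has_real_derivative
        inverse (sqrt (Q c (w x))) / 2 * (-(2*lam*w x + 2 * w x powr p) * w' x)) (at x)"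
      by (rule DERIV_chain2[where f=sqrt and g="\<lambda>y. Q c (w y)", OF DERIV_real_sqrt[OF Qp] d1])
    have w'eq: "w' x = sqrt (Q c (w x))" unfolding w'_def using wx by (simp add: cl_id)
    have eqv: "inverse (sqrt (Q c (w x))) / 2 * (-(2*lam*w x + 2 * w x powr p) * w' x)
       = -(lam * w x + w x powr p)"
      unfolding w'eq by (rule aux_eq) (use Qp in simp)
    have "((\<lambda>y. sqrt (Q c (w y))) has_real_derivative -(lam * w x + w x powr p)) (at x)"
      using d2 unfolding eqv .
    then show ?thesis using DERIV_cong_ev[OF refl ev2 refl] by simp
  qed
  define K where "K = lam*c + c powr p"
  have w'cont: "continuous_on {0..tau c} w'"
    unfolding w'_def Q_def cl_def
    by (intro continuous_intros wcont) (use wrange c in \<open>auto simp: min_def max_def\<close>)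
  have lip1: "\<bar>w' y - w' x\<bar> \<le> K * (y - x)" if "0 \<le> x" "x < y" "y \<le> tau c" for x y
  proof -
    have "continuous_on {x..y} w'" by (rule continuous_on_subset[OF w'cont]) (use that in auto)
    moreover have "w' differentiable (at z)" if "x < z" "z < y" for z
      using w2der[of z] that \<open>0 \<le> x\<close> \<open>y \<le> tau c\<close> real_differentiable_def by force
    ultimately obtain l z where lz: "x < z" "z < y" "DERIV w' z :> l" "w' y - w' x = (y - x) * l"
      using MVT[OF \<open>x < y\<close>] by blast
    have z: "z \<in> {0<..<tau c}" using lz that by auto
    then have l: "l = -(lam * w z + w z powr p)" using DERIV_unique[OF lz(3) w2der] by simp
    have wz: "0 < w z" "w z < c" using z wpos wlt by auto
    have "w z powr p \<le> c powr p" using wz p by (intro powr_mono2) auto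
    moreover have "lam * w z \<le> lam * c" using wz lam by simp
    moreover have "0 \<le> lam * w z" "0 \<le> w z powr p" using wz lam by auto
    ultimately have "\<bar>l\<bar> \<le> K" unfolding K_def l by (simp only: abs_le_iff) linarith
    then show ?thesis using lz that by (simp add: abs_mult mult.commute mult_left_mono)
  qed
  have lip: "\<bar>w' x - w' y\<bar> \<le> (lam*c + c powr p) * \<bar>x - y\<bar>" if "x \<in> {0..tau c}" "y \<in> {0..tau c}" for x y
  proof -
    consider "x < y" | "y < x" | "x = y" by linarith
    then show ?thesis
    proof cases
      case 1 then show ?thesis using lip1[of x y] that unfolding K_def by (auto simp: abs_minus_commute)
    next
      case 2 then show ?thesis using lip1[of y x] that unfolding K_def by (auto simp: abs_minus_commute)
    qed simp
  qed
  have e1: "w 0 = 0" using wX[of 0] X0 c by simp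
  have e2: "w (tau c) = c" using wX[of c] Xc c by simp
  have e3: "w' (tau c) = sqrt (lam*(R^2-c^2))" unfolding w'_def using e2 c cl_id[of c c] Qcc by simp
  show ?thesis
    apply (rule exI[of _ w], rule exI[of _ w'])
    using wder w2der lip e1 e2 e3 wrange wpos by auto
qed


end

lemma deriv_local:
  fixes f g :: "real \<Rightarrow> real"
  assumes "(f has_real_derivative D) (at x)" "open S" "x \<in> S" "\<And>y. y \<in> S \<Longrightarrow> g y = f y"
  shows "(g has_real_derivative D) (at x)"
proof -
  have "eventually (\<lambda>y. y \<in> S) (nhds x)" using assms by (intro eventually_nhds_in_open)
  then have "eventually (\<lambda>y. g y = f y) (nhds x)" by eventually_elim (use assms in auto)
  then show ?thesis using DERIV_cong_ev[OF refl _ refl] assms(1) by blast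
qed

lemma deriv_glue:
  fixes f g :: "real \<Rightarrow> real"
  assumes f: "(f has_real_derivative D) (at x0)" and g: "(g has_real_derivative D) (at x0)"
    and eq: "f x0 = g x0"
  shows "((\<lambda>y. if y \<le> x0 then f y else g y) has_real_derivative D) (at x0)"
proof -
  let ?h = "\<lambda>y. if y \<le> x0 then f y else g y"
  have 1: "(?h has_real_derivative D) (at x0 within {..x0})"
    by (rule has_field_derivative_transform_within[OF has_field_derivative_at_within[OF f], of 1]) auto
  have 2: "(?h has_real_derivative D) (at x0 within {x0..})"
    by (rule has_field_derivative_transform_within[OF has_field_derivative_at_within[OF g], of 1])
      (use eq in auto)
  have "(?h has_real_derivative D) (at x0 within ({..x0} \<union> {x0..}))"
    using 1 2 unfolding has_field_derivative_iff Lim_within_Un by auto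
  moreover have "{..x0} \<union> {x0..} = (UNIV :: real set)" by auto
  ultimately show ?thesis by simp
qed

lemma lip_glue:
  fixes g :: "real \<Rightarrow> real"
  assumes "\<forall>x\<in>{a..b}. \<forall>y\<in>{a..b}. \<bar>g x - g y\<bar> \<le> K * \<bar>x - y\<bar>"
    and "\<forall>x\<in>{b..c}. \<forall>y\<in>{b..c}. \<bar>g x - g y\<bar> \<le> K * \<bar>x - y\<bar>"
    and "a \<le> b" "b \<le> c"
  shows "\<forall>x\<in>{a..c}. \<forall>y\<in>{a..c}. \<bar>g x - g y\<bar> \<le> K * \<bar>x - y\<bar>"
proof (intro ballI)
  fix x y assume x: "x \<in> {a..c}" and y: "y \<in> {a..c}"
  have main: "\<bar>g x - g y\<bar> \<le> K * \<bar>x - y\<bar>" if "x \<in> {a..c}" "y \<in> {a..c}" "x \<le> y" for x y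
  proof (cases "y \<le> b")
    case True
    then have "x \<in> {a..b}" "y \<in> {a..b}" using that by auto
    then show ?thesis using assms(1) by blast
  next
    case False
    show ?thesis
    proof (cases "x \<ge> b")
      case True
      then have "x \<in> {b..c}" "y \<in> {b..c}" using that by auto
      then show ?thesis using assms(2) by blast
    next
      case False
      have "x \<in> {a..b}" "b \<in> {a..b}" "b \<in> {b..c}" "y \<in> {b..c}"
        using that False \<open>\<not> y \<le> b\<close> assms by auto
      then have "\<bar>g x - g b\<bar> \<le> K * \<bar>x - b\<bar>" "\<bar>g b - g y\<bar> \<le> K * \<bar>b - y\<bar>"
        using assms(1,2) by blast+
      moreover have "K * \<bar>x - b\<bar> + K * \<bar>b - y\<bar> = K * \<bar>x - y\<bar>"
        using False \<open>\<not> y \<le> b\<close> by (simp add: algebra_simps)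
      ultimately show ?thesis by linarith
    qed
  qed
  show "\<bar>g x - g y\<bar> \<le> K * \<bar>x - y\<bar>"
    using main[OF x y] main[OF y x] by (cases "x \<le> y") (auto simp: abs_minus_commute)
qed

lemma lip_abs_cont:
  fixes g :: "real \<Rightarrow> real"
  assumes "\<forall>x\<in>{a..b}. \<forall>y\<in>{a..b}. \<bar>g x - g y\<bar> \<le> K * \<bar>x - y\<bar>" "K \<ge> 0"
  shows "abs_cont_on g a b"
  unfolding abs_cont_on_def
proof (intro allI impI)
  fix e :: real assume e: "e > 0"
  show "\<exists>d>0. \<forall>n xs ys. (\<forall>i<n. a \<le> xs i \<and> xs i \<le> ys i \<and> ys i \<le> b) \<and>
        (\<forall>i<n. \<forall>j<n. i \<noteq> j \<longrightarrow> ys i \<le> xs j \<or> ys j \<le> xs i) \<and>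
        (\<Sum>i<n. ys i - xs i) < d \<longrightarrow> (\<Sum>i<n. \<bar>g (ys i) - g (xs i)\<bar>) < e"
  proof (intro exI[of _ "e / (K+1)"] conjI allI impI)
    show "e / (K+1) > 0" using e assms by simp
    fix n xs ys
    assume h: "(\<forall>i<n. a \<le> xs i \<and> xs i \<le> ys i \<and> ys i \<le> b) \<and>
        (\<forall>i<n. \<forall>j<n. i \<noteq> j \<longrightarrow> ys i \<le> xs j \<or> ys j \<le> xs i) \<and>
        (\<Sum>i<n. ys i - xs i) < e / (K+1)"
    have "(\<Sum>i<n. \<bar>g (ys i) - g (xs i)\<bar>) \<le> (\<Sum>i<n. (K+1) * (ys i - xs i))"
    proof (rule sum_mono)
      fix i assume "i \<in> {..<n}"
      then have i: "a \<le> xs i" "xs i \<le> ys i" "ys i \<le> b" using h by auto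
      then have "ys i \<in> {a..b}" "xs i \<in> {a..b}" by auto
      then have "\<bar>g (ys i) - g (xs i)\<bar> \<le> K * \<bar>ys i - xs i\<bar>" using assms(1) by blast
      also have "\<dots> \<le> (K+1) * (ys i - xs i)" using i by (simp add: mult_right_mono)
      finally show "\<bar>g (ys i) - g (xs i)\<bar> \<le> (K+1) * (ys i - xs i)" .
    qed
    also have "\<dots> = (K+1) * (\<Sum>i<n. ys i - xs i)" by (simp add: sum_distrib_left)
    also have "\<dots> < (K+1) * (e / (K+1))" using h assms by (intro mult_strict_left_mono) auto
    also have "\<dots> = e" using assms by simp
    finally show "(\<Sum>i<n. \<bar>g (ys i) - g (xs i)\<bar>) < e" .
  qed
qed

lemma lip_cont:
  fixes g :: "real \<Rightarrow> real"
  assumes "\<forall>x\<in>S. \<forall>y\<in>S. \<bar>g x - g y\<bar> \<le> K * \<bar>x - y\<bar>" "K \<ge> 0"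
  shows "continuous_on S g"
  by (rule lipschitz_on_continuous_on[of K]) (use assms in \<open>auto intro!: lipschitz_onI simp: dist_real_def\<close>)

lemma lip_deriv:
  fixes g g' :: "real \<Rightarrow> real"
  assumes "\<And>x. x \<in> {a..b} \<Longrightarrow> (g has_real_derivative g' x) (at x)" "\<And>x. x \<in> {a..b} \<Longrightarrow> \<bar>g' x\<bar> \<le> K"
  shows "\<forall>x\<in>{a..b}. \<forall>y\<in>{a..b}. \<bar>g x - g y\<bar> \<le> K * \<bar>x - y\<bar>"
proof (intro ballI)
  have main: "\<bar>g y - g x\<bar> \<le> K * (y - x)" if "x \<in> {a..b}" "y \<in> {a..b}" "x < y" for x y
  proof -
    have "continuous_on {x..y} g" using that assms(1)
      by (intro continuous_at_imp_continuous_on ballI DERIV_isCont[OF assms(1)]) auto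
    moreover have "g differentiable (at z)" if "x < z" "z < y" for z
      using assms(1)[of z] that \<open>x \<in> {a..b}\<close> \<open>y \<in> {a..b}\<close> real_differentiable_def by force
    ultimately obtain l z where lz: "x < z" "z < y" "DERIV g z :> l" "g y - g x = (y - x) * l"
      using MVT[OF \<open>x < y\<close>] by blast
    have z: "z \<in> {a..b}" using lz that by auto
    have "l = g' z" using DERIV_unique[OF lz(3) assms(1)[OF z]] .
    then have "\<bar>l\<bar> \<le> K" using assms(2)[OF z] by simp
    then show ?thesis using lz that by (simp add: abs_mult mult.commute mult_left_mono)
  qed
  fix x y assume x: "x \<in> {a..b}" and y: "y \<in> {a..b}"
  consider "x < y" | "y < x" | "x = y" by linarith
  then show "\<bar>g x - g y\<bar> \<le> K * \<bar>x - y\<bar>"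
  proof cases
    case 1 then show ?thesis using main[OF x y] by (auto simp: abs_minus_commute)
  next
    case 2 then show ?thesis using main[OF y x] by (auto simp: abs_minus_commute)
  qed simp
qed


context setting begin

lemma sqrt_id:
  assumes "0 < a" "a < pi/2"
  shows "sqrt (lam*(R^2-(R * cos a)^2)) = sqrt lam * R * sin a"
proof -
  have "R^2-(R * cos a)^2 = (R * sin a)^2"
    by (simp add: power_mult_distrib sin_squared_eq algebra_simps)
  moreover have "R * sin a > 0" using assms R by (intro mult_pos_pos sin_gt_zero) auto
  ultimately show ?thesis by (simp add: real_sqrt_mult)
qed

lemma cos_range:
  assumes "0 < a" "a < pi/2"
  shows "0 < R * cos a" "R * cos a < R"
proof -
  show "0 < R * cos a" using assms R by (intro mult_pos_pos cos_gt_zero_pi) auto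
  have "cos a < cos 0" using assms by (intro cos_monotone_0_pi) auto
  then show "R * cos a < R" using R by simp
qed

lemma construct:
  assumes al: "0 < al" "al < pi/2" and be: "0 < be" "be < pi/2" and L: "0 < L" "L < 1/2"
    and t1: "tau (R * cos al) = L" and t2: "tau (R * cos be) = L"
    and sum: "al + be = sqrt lam * (1 - 2*L)"
  shows "\<exists>u. is_solution p lam (1 - 2*L) u \<and> is_positive u \<and> sup_norm01 u = R
              \<and> u L = R * cos al \<and> u (1-L) = R * cos be"
proof -
  define c1 where "c1 = R * cos al"
  define c2 where "c2 = R * cos be"
  have c1: "0 < c1" "c1 < R" unfolding c1_def using cos_range al by auto
  have c2: "0 < c2" "c2 < R" unfolding c2_def using cos_range be by auto
  define K1 where "K1 = lam*c1 + c1 powr p"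
  define K3 where "K3 = lam*c2 + c2 powr p"
  obtain w1 w1' where
      W1d: "\<forall>x\<in>{0..L}. (w1 has_real_derivative w1' x) (at x)"
    and W1dd: "\<forall>x\<in>{0<..<L}. (w1' has_real_derivative -(lam * w1 x + w1 x powr p)) (at x)"
    and W1l: "\<forall>x\<in>{0..L}. \<forall>y\<in>{0..L}. \<bar>w1' x - w1' y\<bar> \<le> K1 * \<bar>x - y\<bar>"
    and W10: "w1 0 = 0" and W1L: "w1 L = c1" and W1'L: "w1' L = sqrt (lam*(R^2-c1^2))"
    and W1r: "\<forall>x\<in>{0..L}. 0 \<le> w1 x \<and> w1 x \<le> c1" and W1p: "\<forall>x\<in>{0<..L}. 0 < w1 x"
    using left_piece[OF c1] t1 unfolding c1_def[symmetric] K1_def by metis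
  obtain w2 w2' where
      W2d: "\<forall>x\<in>{0..L}. (w2 has_real_derivative w2' x) (at x)"
    and W2dd: "\<forall>x\<in>{0<..<L}. (w2' has_real_derivative -(lam * w2 x + w2 x powr p)) (at x)"
    and W2l: "\<forall>x\<in>{0..L}. \<forall>y\<in>{0..L}. \<bar>w2' x - w2' y\<bar> \<le> K3 * \<bar>x - y\<bar>"
    and W20: "w2 0 = 0" and W2L: "w2 L = c2" and W2'L: "w2' L = sqrt (lam*(R^2-c2^2))"
    and W2r: "\<forall>x\<in>{0..L}. 0 \<le> w2 x \<and> w2 x \<le> c2" and W2p: "\<forall>x\<in>{0<..L}. 0 < w2 x"
    using left_piece[OF c2] t2 unfolding c2_def[symmetric] K3_def by metis
  define om where "om = sqrt lam"
  have om: "om > 0" "om * om = lam" unfolding om_def using lam by auto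
  define xm where "xm = L + al / om"
  define M where "M x = R * cos (om * (x - xm))" for x
  define M' where "M' x = -(R * om * sin (om * (x - xm)))" for x
  have Md: "(M has_real_derivative M' x) (at x)" for x
    unfolding M_def[abs_def] M'_def by (auto intro!: derivative_eq_intros)
  have Mdd: "(M' has_real_derivative -(lam * M x)) (at x)" for x
  proof -
    have "(M' has_real_derivative -(R * om * (cos (om * (x - xm)) * om))) (at x)"
      unfolding M'_def[abs_def] by (auto intro!: derivative_eq_intros)
    moreover have "-(R * om * (cos (om * (x - xm)) * om)) = -(lam * M x)"
      unfolding M_def using om by (simp add: algebra_simps)
    ultimately show ?thesis by simp
  qed
  have omL: "om * (L - xm) = - al" unfolding xm_def using om by (simp add: algebra_simps)
  have om1L: "om * (1 - L - xm) = be" unfolding xm_def using om sum unfolding om_def[symmetric]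
    by (simp add: algebra_simps)
  have hML: "M L = c1" unfolding M_def c1_def omL by simp
  have M'L: "M' L = w1' L" unfolding M'_def W1'L c1_def sqrt_id[OF al] om_def[symmetric] omL by simp
  have hM1L: "M (1-L) = c2" unfolding M_def c2_def om1L by simp
  have M'1L: "M' (1-L) = - w2' L" unfolding M'_def W2'L c2_def sqrt_id[OF be] om_def[symmetric] om1L by simp
  have LL: "L < 1 - L" using L by simp
  define u where "u x = (if x \<le> L then w1 x else if x \<le> 1-L then M x else w2 (1-x))" for x
  define u' where "u' x = (if x \<le> L then w1' x else if x \<le> 1-L then M' x else -(w2' (1-x)))" for x
  have w2refl: "((\<lambda>y. w2 (1-y)) has_real_derivative -(w2' (1-x))) (at x)" if "1 - x \<in> {0..L}" for x
  proof -
    have "((\<lambda>y. w2 (1-y)) has_real_derivative w2' (1-x) * (0 - 1)) (at x)"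
      by (rule DERIV_chain2[where f=w2 and g="\<lambda>y. 1-y"]) (use W2d that in \<open>auto intro!: derivative_eq_intros\<close>)
    then show ?thesis by simp
  qed
  have w2'refl: "((\<lambda>y. -(w2' (1-y))) has_real_derivative -(lam * w2 (1-x) + w2 (1-x) powr p)) (at x)"
    if "1 - x \<in> {0<..<L}" for x
  proof -
    have "((\<lambda>y. w2' (1-y)) has_real_derivative -(lam * w2 (1-x) + w2 (1-x) powr p) * (0 - 1)) (at x)"
      by (rule DERIV_chain2[where f=w2' and g="\<lambda>y. 1-y"]) (use W2dd that in \<open>auto intro!: derivative_eq_intros\<close>)
    from DERIV_minus[OF this] show ?thesis by (simp add: algebra_simps)
  qed
  have D: "(u has_real_derivative u' x) (at x)" if x: "x \<in> {0..1}" for x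
  proof -
    consider "x < L" | "x = L" | "L < x \<and> x < 1-L" | "x = 1-L" | "1-L < x" by linarith
    then show ?thesis
    proof cases
      case 1
      have d: "(w1 has_real_derivative u' x) (at x)" using W1d x 1 by (auto simp: u'_def)
      show ?thesis by (rule deriv_local[OF d, of "{..<L}"]) (use 1 in \<open>auto simp: u_def\<close>)
    next
      case 2
      have d: "((\<lambda>y. if y \<le> L then w1 y else M y) has_real_derivative w1' L) (at L)"
        by (rule deriv_glue) (use W1d L Md[of L] M'L hML W1L in auto)
      have d': "((\<lambda>y. if y \<le> L then w1 y else M y) has_real_derivative u' x) (at x)"
        using d 2 by (simp add: u'_def)
      show ?thesis by (rule deriv_local[OF d', of "{..<1-L}"]) (use 2 LL in \<open>auto simp: u_def\<close>)
    next
      case 3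
      have d: "(M has_real_derivative u' x) (at x)" using Md[of x] 3 by (simp add: u'_def)
      show ?thesis by (rule deriv_local[OF d, of "{L<..<1-L}"]) (use 3 in \<open>auto simp: u_def\<close>)
    next
      case 4
      have d: "((\<lambda>y. if y \<le> 1-L then M y else w2 (1-y)) has_real_derivative M' (1-L)) (at (1-L))"
        by (rule deriv_glue) (use Md[of "1-L"] w2refl[of "1-L"] M'1L hM1L W2L L in auto)
      have d': "((\<lambda>y. if y \<le> 1-L then M y else w2 (1-y)) has_real_derivative u' x) (at x)"
        using d 4 LL by (simp add: u'_def)
      show ?thesis by (rule deriv_local[OF d', of "{L<..}"]) (use 4 LL in \<open>auto simp: u_def\<close>)
    next
      case 5
      have d: "((\<lambda>y. w2 (1-y)) has_real_derivative u' x) (at x)" using w2refl[of x] x 5 LL by (auto simp: u'_def)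
      show ?thesis by (rule deriv_local[OF d, of "{1-L<..}"]) (use 5 LL in \<open>auto simp: u_def\<close>)
    qed
  qed
  have ah: "a_h (1 - 2*L) x = (if L < x \<and> x < 1-L then 0 else 1)" for x
    unfolding a_h_def by (simp add: field_simps)
  have DD: "(u' has_real_derivative -(lam * u x + a_h (1 - 2*L) x * u x powr p)) (at x)"
    if x: "x \<in> {0<..<1}" "x \<noteq> L" "x \<noteq> 1-L" for x
  proof -
    consider "x < L" | "L < x \<and> x < 1-L" | "1-L < x" using x by linarith
    then show ?thesis
    proof cases
      case 1
      have e: "-(lam * u x + a_h (1 - 2*L) x * u x powr p) = -(lam * w1 x + w1 x powr p)"
        using 1 by (simp add: u_def ah)
      have d: "(w1' has_real_derivative -(lam * u x + a_h (1 - 2*L) x * u x powr p)) (at x)"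
        unfolding e using W1dd x 1 by auto
      show ?thesis by (rule deriv_local[OF d, of "{..<L}"]) (use 1 in \<open>auto simp: u'_def\<close>)
    next
      case 2
      have e: "-(lam * u x + a_h (1 - 2*L) x * u x powr p) = -(lam * M x)"
        using 2 by (simp add: u_def ah)
      have d: "(M' has_real_derivative -(lam * u x + a_h (1 - 2*L) x * u x powr p)) (at x)"
        unfolding e by (rule Mdd)
      show ?thesis by (rule deriv_local[OF d, of "{L<..<1-L}"]) (use 2 in \<open>auto simp: u'_def\<close>)
    next
      case 3
      have e: "-(lam * u x + a_h (1 - 2*L) x * u x powr p) = -(lam * w2 (1-x) + w2 (1-x) powr p)"
        using 3 LL by (simp add: u_def ah)
      have d: "((\<lambda>y. -(w2' (1-y))) has_real_derivative -(lam * u x + a_h (1 - 2*L) x * u x powr p)) (at x)"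
        unfolding e using w2'refl x 3 by auto
      show ?thesis by (rule deriv_local[OF d, of "{1-L<..}"]) (use 3 LL in \<open>auto simp: u'_def\<close>)
    qed
  qed
  define K where "K = K1 + lam * R + K3"
  have K1: "K1 \<ge> 0" unfolding K1_def using c1 lam by auto
  have K3: "K3 \<ge> 0" unfolding K3_def using c2 lam by auto
  have K: "K \<ge> 0" "K1 \<le> K" "lam * R \<le> K" "K3 \<le> K" unfolding K_def using K1 K3 lam R by auto
  have lipA: "\<forall>x\<in>{0..L}. \<forall>y\<in>{0..L}. \<bar>u' x - u' y\<bar> \<le> K * \<bar>x - y\<bar>"
  proof (intro ballI)
    fix x y assume xy: "x \<in> {0..L}" "y \<in> {0..L}"
    have "\<bar>w1' x - w1' y\<bar> \<le> K1 * \<bar>x - y\<bar>" using W1l xy by blast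
    also have "\<dots> \<le> K * \<bar>x - y\<bar>" using K by (intro mult_right_mono) auto
    finally show "\<bar>u' x - u' y\<bar> \<le> K * \<bar>x - y\<bar>" using xy by (simp add: u'_def)
  qed
  have lipB0: "\<forall>x\<in>{L..1-L}. \<forall>y\<in>{L..1-L}. \<bar>M' x - M' y\<bar> \<le> K * \<bar>x - y\<bar>"
  proof (rule lip_deriv)
    show "(M' has_real_derivative -(lam * M x)) (at x)" for x by (rule Mdd)
    show "\<bar>-(lam * M x)\<bar> \<le> K" for x
    proof -
      have "\<bar>M x\<bar> \<le> R" unfolding M_def using R by (simp add: abs_mult)
      then have "\<bar>lam * M x\<bar> \<le> lam * R" using lam by (simp add: abs_mult mult_left_mono)
      then show ?thesis using K by simp
    qed
  qed
  have u'B: "u' x = M' x" if "x \<in> {L..1-L}" for x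
    using that M'L by (cases "x = L") (auto simp: u'_def)
  have lipB: "\<forall>x\<in>{L..1-L}. \<forall>y\<in>{L..1-L}. \<bar>u' x - u' y\<bar> \<le> K * \<bar>x - y\<bar>"
    using lipB0 u'B by simp
  have u'C: "u' x = -(w2' (1-x))" if "x \<in> {1-L..1}" for x
    using that M'1L LL by (cases "x = 1-L") (auto simp: u'_def)
  have lipC: "\<forall>x\<in>{1-L..1}. \<forall>y\<in>{1-L..1}. \<bar>u' x - u' y\<bar> \<le> K * \<bar>x - y\<bar>"
  proof (intro ballI)
    fix x y assume xy: "x \<in> {1-L..1}" "y \<in> {1-L..1}"
    then have "1-x \<in> {0..L}" "1-y \<in> {0..L}" by auto
    then have "\<bar>w2' (1-x) - w2' (1-y)\<bar> \<le> K3 * \<bar>(1-x) - (1-y)\<bar>" using W2l by blast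
    also have "\<bar>(1-x) - (1-y)\<bar> = \<bar>x - y\<bar>" by (simp add: abs_minus_commute)
    also have "K3 * \<bar>x - y\<bar> \<le> K * \<bar>x - y\<bar>" using K by (intro mult_right_mono) auto
    finally show "\<bar>u' x - u' y\<bar> \<le> K * \<bar>x - y\<bar>" using xy u'C by (simp add: abs_minus_commute)
  qed
  have lip: "\<forall>x\<in>{0..1}. \<forall>y\<in>{0..1}. \<bar>u' x - u' y\<bar> \<le> K * \<bar>x - y\<bar>"
  proof -
    have "\<forall>x\<in>{0..1-L}. \<forall>y\<in>{0..1-L}. \<bar>u' x - u' y\<bar> \<le> K * \<bar>x - y\<bar>"
      by (rule lip_glue[OF lipA lipB]) (use L LL in auto)
    then show ?thesis by (rule lip_glue[OF _ lipC]) (use L in auto)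
  qed
  have AE: "AE x in lebesgue. x \<in> {0<..<1} \<longrightarrow>
              (u' has_real_derivative (- (lam * u x + a_h (1 - 2*L) x * u x powr p))) (at x)"
  proof -
    have N: "{L, 1-L} \<in> null_sets lebesgue"
      by (intro null_sets_completionI finite_imp_null_set_lborel) auto
    have "AE x in lebesgue. x \<notin> {L, 1-L}"
      by (rule AE_I'[OF N]) auto
    then show ?thesis
    proof (rule eventually_mono)
      fix x assume "x \<notin> {L, 1-L}"
      then show "x \<in> {0<..<1} \<longrightarrow>
              (u' has_real_derivative (- (lam * u x + a_h (1 - 2*L) x * u x powr p))) (at x)"
        using DD[of x] by blast
    qed
  qed
  have sol: "is_solution p lam (1 - 2*L) u"
    unfolding is_solution_def
  proof (intro conjI exI[of _ u'])
    show "\<forall>x\<in>{0..1}. (u has_real_derivative u' x) (at x within {0..1})"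
      using D by (auto intro: has_field_derivative_at_within)
    show "continuous_on {0..1} u'" by (rule lip_cont[OF lip K(1)])
    show "abs_cont_on u' 0 1" by (rule lip_abs_cont[OF lip K(1)])
    show "AE x in lebesgue. x \<in> {0<..<1} \<longrightarrow>
              (u' has_real_derivative (- (lam * u x + a_h (1 - 2*L) x * u x powr p))) (at x)" by (rule AE)
    show "u 0 = 0" using W10 L by (simp add: u_def)
    show "u 1 = 0" using W20 L by (simp add: u_def)
  qed
  have Mpos: "M x > 0" if "L < x" "x \<le> 1-L" for x
  proof -
    have "om * (L - xm) < om * (x - xm)" using that om by (intro mult_strict_left_mono) auto
    moreover have "om * (x - xm) \<le> om * (1 - L - xm)" using that om by (intro mult_left_mono) auto
    ultimately have "-(pi/2) < om * (x - xm)" "om * (x - xm) < pi/2" using omL om1L al be by auto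
    then show ?thesis unfolding M_def using R by (intro mult_pos_pos cos_gt_zero_pi) auto
  qed
  have pos: "is_positive u"
    unfolding is_positive_def
  proof
    fix x :: real assume x: "x \<in> {0<..<1}"
    consider "x \<le> L" | "L < x \<and> x \<le> 1-L" | "1-L < x" by linarith
    then show "u x > 0"
    proof cases
      case 1 then show ?thesis using W1p x by (auto simp: u_def)
    next
      case 2 then show ?thesis using Mpos by (auto simp: u_def)
    next
      case 3
      then have "1 - x \<in> {0<..L}" using x by auto
      then show ?thesis using W2p 3 LL by (auto simp: u_def)
    qed
  qed
  have xm: "L < xm" "xm \<le> 1-L"
  proof -
    show "L < xm" unfolding xm_def using al om by simp
    have "al \<le> om * (1 - 2*L)" using sum be unfolding om_def by simp
    then have "al / om \<le> 1 - 2*L" using om by (simp add: divide_simps mult.commute)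
    then show "xm \<le> 1-L" unfolding xm_def by simp
  qed
  have uxm: "u xm = R" using xm by (simp add: u_def M_def)
  have ubound: "\<bar>u x\<bar> \<le> R" if "x \<in> {0..1}" for x
  proof -
    consider "x \<le> L" | "L < x \<and> x \<le> 1-L" | "1-L < x" by linarith
    then show ?thesis
    proof cases
      case 1
      then have "0 \<le> w1 x" "w1 x \<le> c1" using W1r that by auto
      then show ?thesis using 1 c1 by (auto simp: u_def)
    next
      case 2 then show ?thesis using R by (auto simp: u_def M_def abs_mult)
    next
      case 3
      then have "1 - x \<in> {0..L}" using that by auto
      then have "0 \<le> w2 (1-x)" "w2 (1-x) \<le> c2" using W2r by auto
      then show ?thesis using 3 LL c2 by (auto simp: u_def)
    qed
  qed
  have sup: "sup_norm01 u = R"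
    unfolding sup_norm01_def
  proof (rule cSup_eq_maximum)
    show "R \<in> (\<lambda>x. \<bar>u x\<bar>) ` {0..1}"
      using uxm xm L R by (intro image_eqI[of _ _ xm]) auto
    show "y \<le> R" if "y \<in> (\<lambda>x. \<bar>u x\<bar>) ` {0..1}" for y using that ubound by auto
  qed
  have uL: "u L = R * cos al" using W1L by (simp add: u_def c1_def)
  have u1L: "u (1-L) = R * cos be" using hM1L LL by (simp add: u_def c2_def)
  show ?thesis using sol pos sup uL u1L by blast
qed

end


context setting begin

lemma exist_angles:
  assumes omb: "pi/2 < sqrt lam" "sqrt lam < pi"
  defines "om \<equiv> sqrt lam"
  defines "b0 \<equiv> (om + pi)/4"
  defines "a1 \<equiv> (2* om - pi)/4"
  defines "aa \<equiv> cos (om - b0)"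
  defines "B \<equiv> 2 * sqrt ((aa*R) powr (1-p) / k)"
  defines "c2s \<equiv> R powr (2/(p+1))"
  assumes H1: "B \<le> (2* om - pi)/(8* om)" "B \<le> b0/(4* om)" "B \<le> (pi - om)/(8* om)" "B \<le> 1/4"
    and H2: "c2s / R \<le> cos b0"
    and H3: "B < c2s / (R * sqrt (lam + k))"
  shows "\<exists>al be L. 0 < al \<and> al < pi/2 \<and> 0 < be \<and> be < pi/2 \<and> al \<noteq> be \<and> 0 < L \<and> L \<le> B \<and> L < 1/2
           \<and> tau (R*cos al) = L \<and> tau (R*cos be) = L \<and> al + be = om*(1 - 2*L)"
proof -
  have om: "pi/2 < om" "om < pi" "om > 0" using omb lam unfolding om_def by auto
  define a3 where "a3 = om - b0"
  have a11: "0 < a1" unfolding a1_def using om by (simp add: field_simps)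
  have a12: "a1 < a3" unfolding a1_def a3_def b0_def using om by (simp add: field_simps)
  note a1 = a11 a12
  have a31: "0 < a3" unfolding a3_def b0_def using om by (simp add: field_simps)
  have a32: "a3 < pi/2" unfolding a3_def b0_def using om by (simp add: field_simps)
  note a3 = a31 a32
  have b01: "0 < b0" unfolding b0_def using om by (simp add: field_simps)
  have b02: "b0 < pi/2" unfolding b0_def using om by (simp add: field_simps)
  note b0 = b01 b02
  have aa: "aa > 0" unfolding aa_def a3_def[symmetric] using a3 by (intro cos_gt_zero_pi) auto
  have Bnn: "B \<ge> 0" unfolding B_def using k_pos by simp
  define T where "T al = tau (R * cos al)" for al
  define bf where "bf al = om * (1 - 2 * T al) - al" for al
  have cosge: "cos al \<ge> aa" if "al \<in> {a1..a3}" for al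
    unfolding aa_def a3_def[symmetric] using that a1 a3 by (intro cos_monotone_0_pi_le) auto
  have cpos: "0 < R * cos al" "R * cos al < R" if "al \<in> {a1..a3}" for al
    using cos_range[of al] that a1 a3 by auto
  have Tpos: "T al > 0" if "al \<in> {a1..a3}" for al
    unfolding T_def using tau_pos cpos[OF that] by auto
  have TB: "T al \<le> B" if "al \<in> {a1..a3}" for al
  proof -
    have "T al \<le> 2 * sqrt ((R * cos al) powr (1-p) / k)"
      unfolding T_def using tau_upper cpos[OF that] by auto
    also have "\<dots> \<le> B" unfolding B_def
    proof -
      have "aa * R \<le> R * cos al" using cosge[OF that] R by (simp add: mult.commute)
      then have "(R * cos al) powr (1-p) \<le> (aa*R) powr (1-p)"
        using p aa R by (intro powr_mono2') auto
      then show "2 * sqrt ((R * cos al) powr (1-p) / k) \<le> 2 * sqrt ((aa*R) powr (1-p) / k)"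
        using k_pos by (simp add: divide_right_mono)
    qed
    finally show ?thesis .
  qed
  have bf_lo: "bf al \<ge> b0/2" if "al \<in> {a1..a3}" for al
  proof -
    have "2 * om * T al \<le> 2 * om * B" using TB[OF that] om by simp
    also have "\<dots> \<le> b0/2" using H1(2) om by (simp add: field_simps)
    finally show ?thesis unfolding bf_def a3_def using that a3_def by (auto simp: algebra_simps)
  qed
  have bf_hi: "bf al \<le> om" if "al \<in> {a1..a3}" for al
    unfolding bf_def using Tpos[OF that] om that a1 by (simp add: algebra_simps)
  define mm where "mm = R * max (cos a1) (cos (b0/2))"
  have mm: "mm < R"
  proof -
    have "cos a1 < cos 0" using a1 a3 by (intro cos_monotone_0_pi) auto
    moreover have "cos (b0/2) < cos 0" using b0 by (intro cos_monotone_0_pi) auto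
    ultimately show ?thesis unfolding mm_def using R by simp
  qed
  have tc: "continuous_on {..mm} tau" by (rule tau_cont[OF mm])
  have Tcont: "continuous_on {a1..a3} T"
    unfolding T_def
  proof (rule continuous_on_compose2[OF tc])
    show "continuous_on {a1..a3} (\<lambda>x. R * cos x)" by (intro continuous_intros)
    show "(\<lambda>x. R * cos x) ` {a1..a3} \<subseteq> {..mm}"
    proof
      fix y assume "y \<in> (\<lambda>x. R * cos x) ` {a1..a3}"
      then obtain x where x: "x \<in> {a1..a3}" "y = R * cos x" by auto
      have "cos x \<le> cos a1" using x a1 a3 by (intro cos_monotone_0_pi_le) auto
      then show "y \<in> {..mm}" unfolding mm_def using x R by (auto intro: mult_left_mono order_trans)
    qed
  qed
  have bfcont: "continuous_on {a1..a3} bf"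
    unfolding bf_def by (intro continuous_intros Tcont)
  have Gcont: "continuous_on {a1..a3} (\<lambda>al. tau (R * cos (bf al)) - T al)"
  proof (intro continuous_on_diff Tcont)
    show "continuous_on {a1..a3} (\<lambda>al. tau (R * cos (bf al)))"
    proof (rule continuous_on_compose2[OF tc])
      show "continuous_on {a1..a3} (\<lambda>x. R * cos (bf x))" by (intro continuous_intros bfcont)
      show "(\<lambda>x. R * cos (bf x)) ` {a1..a3} \<subseteq> {..mm}"
      proof
        fix y assume "y \<in> (\<lambda>x. R * cos (bf x)) ` {a1..a3}"
        then obtain x where x: "x \<in> {a1..a3}" "y = R * cos (bf x)" by auto
        have "cos (bf x) \<le> cos (b0/2)" using bf_lo[OF x(1)] bf_hi[OF x(1)] b0 om
          by (intro cos_monotone_0_pi_le) auto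
        then show "y \<in> {..mm}" unfolding mm_def using x R by (auto intro: mult_left_mono order_trans)
      qed
    qed
  qed
  have c2s: "0 < c2s" "c2s < R"
  proof -
    show "0 < c2s" unfolding c2s_def using R by simp
    then have "c2s / R < 1" using H2 cos_monotone_0_pi[of 0 b0] b0 by simp
    then show "c2s < R" using R by (simp add: divide_simps)
  qed
  have phi1: "cos (bf a1) \<le> c2s / R"
  proof -
    have "2 * om * T a1 \<le> 2 * om * B" using TB[of a1] a1 om by simp
    also have "\<dots> \<le> (2* om - pi)/4" using H1(1) om by (simp add: field_simps)
    finally have "bf a1 \<ge> pi/2" unfolding bf_def a1_def by (simp add: field_simps)
    then have "cos (bf a1) \<le> cos (pi/2)" using bf_hi[of a1] a1 om by (intro cos_monotone_0_pi_le) auto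
    moreover have "0 < c2s / R" using c2s R by simp
    ultimately show ?thesis by simp
  qed
  have phi3: "c2s / R \<le> cos (bf a3)"
  proof -
    have e: "bf a3 = b0 - 2 * om * T a3" unfolding bf_def by (simp add: a3_def algebra_simps)
    have "T a3 > 0" using Tpos[of a3] a1 by auto
    then have "bf a3 \<le> b0" unfolding e using om by simp
    moreover have "0 \<le> bf a3" using bf_lo[of a3] a1 b0 by auto
    ultimately have "cos b0 \<le> cos (bf a3)" using b0 by (intro cos_monotone_0_pi_le) auto
    then show ?thesis using H2 by simp
  qed
  obtain a2 where a2: "a1 \<le> a2" "a2 \<le> a3" "cos (bf a2) = c2s / R"
    using IVT'[of "\<lambda>al. cos (bf al)" a1 "c2s/R" a3] phi1 phi3 a1
      continuous_on_compose2[OF continuous_on_cos[OF continuous_on_id] bfcont] by auto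
  have Rc2: "R * cos (bf a2) = c2s" using a2 R by simp
  have G1: "tau (R * cos (bf a1)) - T a1 \<le> 0"
  proof -
    have "R * cos (bf a1) \<le> 0"
    proof -
      have "2 * om * T a1 \<le> 2 * om * B" using TB[of a1] a1 om by simp
      also have "\<dots> \<le> (2* om - pi)/4" using H1(1) om by (simp add: field_simps)
      finally have "bf a1 \<ge> pi/2" unfolding bf_def a1_def by (simp add: field_simps)
      then have "cos (bf a1) \<le> cos (pi/2)" using bf_hi[of a1] a1 om by (intro cos_monotone_0_pi_le) auto
      then show ?thesis using R by (simp add: mult_nonneg_nonpos)
    qed
    then show ?thesis using tau_nonpos Tpos[of a1] a1 by auto
  qed
  have G2: "tau (R * cos (bf a2)) - T a2 \<ge> 0"
  proof -
    have "pw c2s = R^2"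
    proof -
      have "pw c2s = R powr (2/(p+1) * (p+1))" unfolding pw_def c2s_def by (simp add: powr_powr)
      also have "2/(p+1) * (p+1) = 2" using p by (simp add: divide_simps)
      finally show ?thesis using R by (simp add: powr_numeral)
    qed
    moreover have "lam*R^2 + k * R^2 = R^2 * (lam + k)" by (simp add: algebra_simps)
    ultimately have "sqrt (lam*R^2 + k * pw c2s) = R * sqrt (lam + k)"
      using R by (simp add: real_sqrt_mult)
    then have "tau c2s \<ge> c2s / (R * sqrt (lam + k))" using tau_lower[of c2s] c2s by simp
    moreover have "T a2 \<le> B" using TB a2 by auto
    ultimately show ?thesis using H3 Rc2 by simp
  qed
  obtain a0 where a0: "a1 \<le> a0" "a0 \<le> a2" "tau (R * cos (bf a0)) - T a0 = 0"
    using IVT'[of "\<lambda>al. tau (R * cos (bf al)) - T al" a1 0 a2] G1 G2 a2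
      continuous_on_subset[OF Gcont, of "{a1..a2}"] by auto
  have a0r: "a0 \<in> {a1..a3}" using a0 a2 by auto
  define L where "L = T a0"
  define be where "be = bf a0"
  have L: "0 < L" "L \<le> B" unfolding L_def using Tpos TB a0r by auto
  have tb: "tau (R * cos be) = L" using a0 unfolding be_def L_def by simp
  have cbe: "cos be > 0"
  proof (rule ccontr)
    assume "\<not> cos be > 0"
    then have "R * cos be \<le> 0" using R by (simp add: mult_nonneg_nonpos)
    then show False using tau_nonpos tb L by auto
  qed
  have be_lo: "be \<ge> b0/2" and be_hi: "be \<le> om" unfolding be_def using bf_lo bf_hi a0r by auto
  have be2: "be < pi/2"
  proof (rule ccontr)
    assume "\<not> be < pi/2"
    then have "cos be \<le> cos (pi/2)" using be_hi om by (intro cos_monotone_0_pi_le) auto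
    then show False using cbe by simp
  qed
  have sum: "a0 + be = om * (1 - 2*L)" unfolding be_def bf_def L_def by simp
  have ne: "a0 \<noteq> be"
  proof -
    have "2 * om * L \<le> 2 * om * B" using L om by simp
    also have "\<dots> \<le> (pi - om)/4" using H1(3) om by (simp add: field_simps)
    finally have "2 * om * L \<le> (pi - om)/4" .
    moreover have "a0 \<le> om - b0" using a0r a3_def by auto
    ultimately have "2 * a0 < om * (1 - 2*L)" unfolding b0_def using om by (simp add: field_simps)
    then show ?thesis using sum by auto
  qed
  have f1: "0 < a0" "a0 < pi/2" using a0r a1 a3 by auto
  have f2: "0 < be" using be_lo b0 by auto
  have f3: "L < 1/2" using L H1(4) by auto
  have f4: "tau (R * cos a0) = L" unfolding L_def T_def ..
  show ?thesis
    apply (rule exI[of _ a0], rule exI[of _ be], rule exI[of _ L])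
    using f1 f2 f3 f4 be2 ne L tb sum by blast
qed

end


lemma B_lim:
  fixes p aa kk :: real
  assumes "p > 1" "aa > 0" "kk > 0"
  shows "((\<lambda>R. 2 * sqrt ((aa*R) powr (1-p) / kk)) \<longlongrightarrow> 0) at_top"
proof -
  have "filterlim (\<lambda>R::real. aa * R) at_top at_top"
    by (rule filterlim_tendsto_pos_mult_at_top[OF tendsto_const assms(2) filterlim_ident])
  then have "((\<lambda>R. (aa*R) powr (1-p)) \<longlongrightarrow> 0) at_top"
    using assms by (intro tendsto_neg_powr) auto
  then have "((\<lambda>R. 2 * sqrt ((aa*R) powr (1-p) / kk)) \<longlongrightarrow> 2 * sqrt (0 / kk)) at_top"
    using assms(3) by (intro tendsto_intros) auto
  then show ?thesis by simp
qed

lemma E2_lemma: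
  fixes p b :: real
  assumes "p > 1" "b > 0"
  shows "eventually (\<lambda>R. R powr (2/(p+1)) / R \<le> b) at_top"
proof -
  have "((\<lambda>R::real. R powr (2/(p+1) - 1)) \<longlongrightarrow> 0) at_top"
    using assms by (intro tendsto_neg_powr filterlim_ident) (auto simp: field_simps)
  then have "eventually (\<lambda>R. R powr (2/(p+1) - 1) < b) at_top"
    using assms by (intro order_tendstoD(2)) auto
  moreover have "eventually (\<lambda>R::real. R > 0) at_top" by (rule eventually_gt_at_top)
  ultimately show ?thesis
  proof eventually_elim
    case (elim R)
    then show ?case by (simp add: powr_diff)
  qed
qed

lemma E3_lemma:
  fixes p aa kk lam :: real
  assumes p: "p > 1" and aa: "aa > 0" and kk: "kk > 0" and lk: "lam + kk > 0"
  shows "eventually (\<lambda>R. 2 * sqrt ((aa*R) powr (1-p) / kk) < R powr (2/(p+1)) / (R * sqrt (lam + kk))) at_top"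
proof -
  define e where "e = 4/(p+1) + p - 3"
  have e: "e > 0"
  proof -
    have "e * (p+1) = (p-1)^2" unfolding e_def using p by (simp add: field_simps power2_eq_square)
    moreover have "(p-1)^2 > 0" using p by simp
    ultimately show ?thesis using p by (smt (verit) mult_nonpos_nonneg)
  qed
  define C where "C = 4 * aa powr (1-p) * (lam + kk) / kk"
  have C: "C > 0" unfolding C_def using aa kk lk by simp
  have "((\<lambda>R::real. R powr (-e)) \<longlongrightarrow> 0) at_top"
    using e by (intro tendsto_neg_powr filterlim_ident) auto
  then have "eventually (\<lambda>R. R powr (-e) < 1/C) at_top"
    using C by (intro order_tendstoD(2)) auto
  moreover have "eventually (\<lambda>R::real. R > 0) at_top" by (rule eventually_gt_at_top)
  ultimately show ?thesis
  proof eventually_elim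
    case (elim R)
    have R: "R > 0" using elim by simp
    have Re: "R powr e > C"
    proof -
      have "inverse (R powr e) < 1/C" using elim by (simp add: powr_minus)
      then show ?thesis using C R by (simp add: field_simps)
    qed
    define Y where "Y = R powr (2/(p+1)) / (R * sqrt (lam + kk))"
    have Y: "Y > 0" unfolding Y_def using R lk by simp
    have Y2: "Y^2 = R powr (4/(p+1) - 2) / (lam + kk)"
    proof -
      have "Y^2 = (R powr (2/(p+1)))^2 / (R^2 * (lam + kk))"
        unfolding Y_def using lk by (simp add: power_divide power_mult_distrib)
      also have "(R powr (2/(p+1)))^2 = R powr (4/(p+1))"
        using R by (simp add: power2_eq_square powr_add[symmetric])
      also have "R^2 = R powr 2" using R by (simp add: powr_numeral)
      also have "R powr (4/(p+1)) / (R powr 2 * (lam + kk)) = R powr (4/(p+1) - 2) / (lam + kk)"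
        using R by (simp add: powr_diff)
      finally show ?thesis .
    qed
    have X4: "4 * ((aa*R) powr (1-p) / kk) = C * R powr (1-p) / (lam + kk)"
      unfolding C_def using aa R lk kk by (simp add: powr_mult)
    have "C * R powr (1-p) < R powr e * R powr (1-p)"
      using Re R by (intro mult_strict_right_mono) auto
    also have "R powr e * R powr (1-p) = R powr (4/(p+1) - 2)"
      unfolding e_def by (simp add: powr_add[symmetric])
    finally have "4 * ((aa*R) powr (1-p) / kk) < Y^2"
      unfolding X4 Y2 using lk by (simp add: divide_strict_right_mono)
    then have "sqrt (4 * ((aa*R) powr (1-p) / kk)) < sqrt (Y^2)" by (rule real_sqrt_less_mono)
    moreover have "sqrt (4 * ((aa*R) powr (1-p) / kk)) = 2 * sqrt ((aa*R) powr (1-p) / kk)"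
      by (simp only: real_sqrt_mult) simp
    ultimately have "2 * sqrt ((aa*R) powr (1-p) / kk) < Y" using Y by simp
    then show ?case unfolding Y_def .
  qed
qed

theorem theorem5p1:
  fixes p lam :: real
  assumes "p > 1"
    and "pi\<^sup>2 / 4 < lam" and "lam < pi\<^sup>2"
  shows "\<exists>R_lam > 0. \<exists>h :: real \<Rightarrow> real.
           (\<forall>R > R_lam. 0 < h R \<and> h R < 1 \<and>
              (\<exists>u v. (\<exists>x\<in>{0..1}. u x \<noteq> v x) \<and>
                 is_solution p lam (h R) u \<and> is_positive u \<and> is_asymmetric u \<and> sup_norm01 u = R \<and>
                 is_solution p lam (h R) v \<and> is_positive v \<and> is_asymmetric v \<and> sup_norm01 v = R)) \<and>
           (h \<longlongrightarrow> 1) at_top"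
proof -
  have p: "p > 1" using assms by simp
  have lam: "lam > 0" using assms(2) by (smt (verit) divide_nonneg_pos zero_le_power2)
  define om where "om = sqrt lam"
  have om1: "pi/2 < om"
  proof -
    have "(pi/2)^2 < lam" using assms(2) by (simp add: power_divide)
    then show ?thesis unfolding om_def by (rule real_less_rsqrt)
  qed
  have om2: "om < pi"
  proof -
    have "sqrt lam < sqrt (pi^2)" using assms(3) by (rule real_sqrt_less_mono)
    then show ?thesis unfolding om_def by simp
  qed
  have om0: "om > 0" using om1 pi_gt_zero by linarith
  define b0 where "b0 = (om + pi)/4"
  define aa where "aa = cos (om - b0)"
  define kk where "kk = setting.k p"
  have st1: "setting p lam 1" unfolding setting_def using p lam by auto
  have kk2: "kk = 2/(p+1)" unfolding kk_def using setting.k_def[OF st1] .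
  have kk1: "kk > 0" using kk2 p by simp
  note kk = kk1 kk2
  define B where "B R = 2 * sqrt ((aa*R) powr (1-p) / kk)" for R
  define eps where "eps = min (min ((2 * om - pi)/(8 * om)) (b0/(4 * om))) (min ((pi - om)/(8 * om)) (1/4))"
  have b0: "0 < b0" "b0 < pi/2" unfolding b0_def using om1 om2 om0 by (simp_all add: field_simps)
  have aa: "aa > 0" unfolding aa_def b0_def using om1 om2
    by (intro cos_gt_zero_pi) (simp_all add: field_simps)
  have eps: "eps > 0" unfolding eps_def using om1 om2 om0 b0 by (simp add: field_simps)
  have Blim: "(B \<longlongrightarrow> 0) at_top" unfolding B_def[abs_def] using B_lim[OF p aa kk(1)] .
  have E1: "eventually (\<lambda>R. B R < eps) at_top" using Blim eps by (intro order_tendstoD(2)) auto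
  have E2: "eventually (\<lambda>R. R powr (2/(p+1)) / R \<le> cos b0) at_top"
    using b0 by (intro E2_lemma p cos_gt_zero_pi) auto
  have E3: "eventually (\<lambda>R. B R < R powr (2/(p+1)) / (R * sqrt (lam + kk))) at_top"
    unfolding B_def using lam kk1 by (intro E3_lemma p aa) auto
  have E0: "eventually (\<lambda>R::real. R > 0) at_top" by (rule eventually_gt_at_top)
  have "eventually (\<lambda>R. R > 0 \<and> B R < eps \<and> R powr (2/(p+1)) / R \<le> cos b0 \<and>
          B R < R powr (2/(p+1)) / (R * sqrt (lam + kk))) at_top"
    using E0 E1 E2 E3 by eventually_elim auto
  then obtain N where N: "\<And>R. R \<ge> N \<Longrightarrow> R > 0 \<and> B R < eps \<and> R powr (2/(p+1)) / R \<le> cos b0 \<and>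
          B R < R powr (2/(p+1)) / (R * sqrt (lam + kk))"
    unfolding eventually_at_top_linorder by blast
  define R0 where "R0 = max N 1"
  define P where "P R hh \<longleftrightarrow> 0 < hh \<and> hh < 1 \<and> 1 - 2 * B R \<le> hh \<and>
              (\<exists>u v. (\<exists>x\<in>{0..1}. u x \<noteq> v x) \<and>
                 is_solution p lam hh u \<and> is_positive u \<and> is_asymmetric u \<and> sup_norm01 u = R \<and>
                 is_solution p lam hh v \<and> is_positive v \<and> is_asymmetric v \<and> sup_norm01 v = R)" for R hh
  have ex: "\<exists>hh. P R hh" if R: "R > R0" for R
  proof -
    have NR: "R > 0" "B R < eps" "R powr (2/(p+1)) / R \<le> cos b0"
          "B R < R powr (2/(p+1)) / (R * sqrt (lam + kk))"
      using N[of R] R unfolding R0_def by auto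
    have st: "setting p lam R" unfolding setting_def using p lam NR by auto
    have H1: "B R \<le> (2 * om - pi)/(8 * om)" "B R \<le> b0/(4 * om)" "B R \<le> (pi - om)/(8 * om)" "B R \<le> 1/4"
      using NR(2) unfolding eps_def by auto
    obtain al be L where A: "0 < al" "al < pi/2" "0 < be" "be < pi/2" "al \<noteq> be" "0 < L" "L \<le> B R"
        "L < 1/2" "setting.tau p lam R (R*cos al) = L" "setting.tau p lam R (R*cos be) = L"
        "al + be = sqrt lam * (1 - 2*L)"
      using setting.exist_angles[OF st] om1 om2 H1 NR(3,4)
      unfolding B_def om_def b0_def aa_def kk_def by blast
    obtain u where U: "is_solution p lam (1 - 2*L) u" "is_positive u" "sup_norm01 u = R"
        "u L = R * cos al" "u (1-L) = R * cos be"
      using setting.construct[OF st A(1-4,6,8-11)] by blast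
    have A11': "be + al = sqrt lam * (1 - 2*L)" using A(11) by simp
    obtain v where V: "is_solution p lam (1 - 2*L) v" "is_positive v" "sup_norm01 v = R"
        "v L = R * cos be" "v (1-L) = R * cos al"
      using setting.construct[OF st A(3,4,1,2,6,8,10,9) A11'] by blast
    have cne: "R * cos al \<noteq> R * cos be"
    proof
      assume "R * cos al = R * cos be"
      then have "cos al = cos be" using NR(1) by simp
      then have "al = be" by (rule cos_inj_pi[rotated 4]) (use A in auto)
      then show False using A(5) by simp
    qed
    have L01: "L \<in> {0..1}" using A by auto
    have d: "\<exists>x\<in>{0..1}. u x \<noteq> v x"
    proof -
      have "u L \<noteq> v L" using U(4) V(4) cne by simp
      then show ?thesis using L01 by blast
    qed
    have au: "is_asymmetric u"
    proof -
      have "u L \<noteq> u (1 - L)" using U(4,5) cne by simp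
      then show ?thesis unfolding is_asymmetric_def using L01 by blast
    qed
    have av: "is_asymmetric v"
    proof -
      have "v L \<noteq> v (1 - L)" using V(4,5) cne by simp
      then show ?thesis unfolding is_asymmetric_def using L01 by blast
    qed
    have ineq: "0 < 1 - 2*L" "1 - 2*L < 1" "1 - 2 * B R \<le> 1 - 2*L" using A by auto
    have "P R (1 - 2*L)"
      unfolding P_def
      apply (intro conjI ineq)
      apply (rule exI[of _ u])
      apply (rule exI[of _ v])
      using d au av U V by blast
    then show ?thesis by blast
  qed
  define h where "h R = (if R > R0 then (SOME hh. P R hh) else 0)" for R
  have hP: "P R (h R)" if "R > R0" for R
    unfolding h_def using that someI_ex[OF ex[OF that]] by simp
  have R0: "R0 > 0" unfolding R0_def by simp
  show ?thesis
  proof (rule exI[of _ R0], rule conjI[OF R0], rule exI[of _ h], intro conjI allI impI)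
    fix R assume "R > R0"
    then show "0 < h R" "h R < 1"
      "\<exists>u v. (\<exists>x\<in>{0..1}. u x \<noteq> v x) \<and>
                 is_solution p lam (h R) u \<and> is_positive u \<and> is_asymmetric u \<and> sup_norm01 u = R \<and>
                 is_solution p lam (h R) v \<and> is_positive v \<and> is_asymmetric v \<and> sup_norm01 v = R"
      using hP[of R] unfolding P_def by auto
  next
    have ev: "eventually (\<lambda>R. R > R0) at_top" by (rule eventually_gt_at_top)
    show "(h \<longlongrightarrow> 1) at_top"
    proof (rule tendsto_sandwich[of "\<lambda>R. 1 - 2 * B R" h _ "\<lambda>R. 1"])
      show "eventually (\<lambda>R. 1 - 2 * B R \<le> h R) at_top"
        using ev by eventually_elim (use hP P_def in auto)
      show "eventually (\<lambda>R. h R \<le> 1) at_top"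
        using ev by eventually_elim (use hP P_def in \<open>auto simp: less_imp_le\<close>)
      show "((\<lambda>R. 1 - 2 * B R) \<longlongrightarrow> 1) at_top"
        using tendsto_diff[OF tendsto_const tendsto_mult[OF tendsto_const Blim], of 1 2] by simp
    qed simp
  qed
qed


end
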